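(* Let $T$ be a tree on at least three vertices and $S \subseteq V(T)$. For a leaf $\ell \in S$, say that $S$ satisfies condition (II) for $\ell$ if every edge $\{a,b\}$ of $T$ with $a$ closer to $\ell$ than $b$ satisfies: (i) if $a,b\notin S$ then $N(b)\cap S=\emptyset$; (ii) if $a\notin S$, $b\in S$ then $|N(b)\cap S|\le 1$; (iii) if $a\in S$, $b\notin S$ then $|(N(b)\cap S)\setminus\{a\}|=1$; (iv) if $a,b\in S$ then $|(N(b)\cap S)\setminus\{a\}|=0$. If $S$ satisfies condition (II) for some leaf $\ell' \in S$, then $S$ satisfies condition (II) for every other leaf $\ell'' \in S$.
   Context: $N(b)$ is the set of neighbors of $b$; distances are graph distances in $T$; a leaf is a vertex of degree one. *)

theory Defs
  imports Main
begin

definition graph :: "'a set \<Rightarrow> ('a \<Rightarrow> 'a \<Rightarrow> bool) \<Rightarrow> bool" where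
  "graph V E \<longleftrightarrow> finite V \<and> (\<forall>x y. E x y \<longrightarrow> x \<in> V \<and> y \<in> V)
     \<and> (\<forall>x y. E x y \<longrightarrow> E y x) \<and> (\<forall>x. \<not> E x x)"

definition walk :: "'a set \<Rightarrow> ('a \<Rightarrow> 'a \<Rightarrow> bool) \<Rightarrow> 'a list \<Rightarrow> bool" where
  "walk V E xs \<longleftrightarrow> xs \<noteq> [] \<and> set xs \<subseteq> V \<and> (\<forall>i. Suc i < length xs \<longrightarrow> E (xs ! i) (xs ! Suc i))"

definition connected_graph :: "'a set \<Rightarrow> ('a \<Rightarrow> 'a \<Rightarrow> bool) \<Rightarrow> bool" where
  "connected_graph V E \<longleftrightarrow>
     (\<forall>u\<in>V. \<forall>v\<in>V. \<exists>xs. walk V E xs \<and> hd xs = u \<and> last xs = v)"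

definition is_cycle :: "'a set \<Rightarrow> ('a \<Rightarrow> 'a \<Rightarrow> bool) \<Rightarrow> 'a list \<Rightarrow> bool" where
  "is_cycle V E xs \<longleftrightarrow> walk V E xs \<and> distinct xs \<and> length xs \<ge> 3 \<and> E (last xs) (hd xs)"

definition tree :: "'a set \<Rightarrow> ('a \<Rightarrow> 'a \<Rightarrow> bool) \<Rightarrow> bool" where
  "tree V E \<longleftrightarrow> graph V E \<and> V \<noteq> {} \<and> connected_graph V E \<and> (\<nexists>xs. is_cycle V E xs)"

definition gdist :: "'a set \<Rightarrow> ('a \<Rightarrow> 'a \<Rightarrow> bool) \<Rightarrow> 'a \<Rightarrow> 'a \<Rightarrow> nat" where
  "gdist V E u v = (LEAST n. \<exists>xs. walk V E xs \<and> hd xs = u \<and> last xs = v \<and> length xs = Suc n)"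

definition nbhd :: "'a set \<Rightarrow> ('a \<Rightarrow> 'a \<Rightarrow> bool) \<Rightarrow> 'a \<Rightarrow> 'a set" where
  "nbhd V E b = {x \<in> V. E b x}"

definition leaf :: "'a set \<Rightarrow> ('a \<Rightarrow> 'a \<Rightarrow> bool) \<Rightarrow> 'a \<Rightarrow> bool" where
  "leaf V E v \<longleftrightarrow> v \<in> V \<and> card (nbhd V E v) = 1"

definition condII :: "'a set \<Rightarrow> ('a \<Rightarrow> 'a \<Rightarrow> bool) \<Rightarrow> 'a set \<Rightarrow> 'a \<Rightarrow> bool" where
  "condII V E S l \<longleftrightarrow>
    (\<forall>a b. E a b \<and> gdist V E l a < gdist V E l b \<longrightarrow>
       (a \<notin> S \<and> b \<notin> S \<longrightarrow> nbhd V E b \<inter> S = {}) \<and>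
       (a \<notin> S \<and> b \<in> S \<longrightarrow> card (nbhd V E b \<inter> S) \<le> 1) \<and>
       (a \<in> S \<and> b \<notin> S \<longrightarrow> card ((nbhd V E b \<inter> S) - {a}) = 1) \<and>
       (a \<in> S \<and> b \<in> S \<longrightarrow> card ((nbhd V E b \<inter> S) - {a}) = 0))"

end

theory Submission
  imports Defs
begin

lemma walk_succ: "walk V E xs \<longleftrightarrow> xs \<noteq> [] \<and> set xs \<subseteq> V \<and> successively E xs"
  unfolding walk_def successively_conv_nth by blast

lemma gdist_le:
  assumes "walk V E xs" "hd xs = r" "last xs = v"
  shows "gdist V E r v \<le> length xs - 1"
proof -
  have "xs \<noteq> []" using assms(1) by (simp add: walk_def)
  then have "length xs = Suc (length xs - 1)" by simp
  then show ?thesis unfolding gdist_def using assms by (intro Least_le) blast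
qed

lemma gdist_le_split:
  assumes "walk V E (as @ w # bs)" "hd (as @ w # bs) = r"
  shows "gdist V E r w \<le> length as"
proof -
  have "walk V E (as @ [w])" using assms(1) by (auto simp: walk_succ successively_append_iff)
  moreover have "hd (as @ [w]) = r" using assms(2) by (cases as) auto
  ultimately show ?thesis using gdist_le[of V E "as @ [w]" r w] by simp
qed

lemma shortest_walk:
  assumes "connected_graph V E" "r \<in> V" "v \<in> V"
  shows "\<exists>xs. walk V E xs \<and> hd xs = r \<and> last xs = v \<and> length xs = Suc (gdist V E r v) \<and> distinct xs"
proof -
  obtain xs0 where "walk V E xs0" "hd xs0 = r" "last xs0 = v"
    using assms unfolding connected_graph_def by blast
  then have ex: "\<exists>n xs. walk V E xs \<and> hd xs = r \<and> last xs = v \<and> length xs = Suc n"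
    by (intro exI[of _ "length xs0 - 1"] exI[of _ xs0]) (auto simp: walk_def)
  obtain xs where xs: "walk V E xs" "hd xs = r" "last xs = v" "length xs = Suc (gdist V E r v)"
    using LeastI_ex[OF ex] unfolding gdist_def by blast
  have "distinct xs"
  proof (rule ccontr)
    assume "\<not> distinct xs"
    then obtain as y bs cs where eq: "xs = as@[y]@bs@[y]@cs" using not_distinct_decomp by blast
    let ?ys = "as @ [y] @ cs"
    have "walk V E ?ys" using xs(1) unfolding eq
      by (auto simp: walk_succ successively_append_iff successively_Cons split: if_splits)
    moreover have "hd ?ys = r" using xs(2) unfolding eq by (cases as) auto
    moreover have "last ?ys = v" using xs(3) unfolding eq by (cases cs) auto
    ultimately have "gdist V E r v \<le> length ?ys - 1" by (rule gdist_le)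
    then show False using xs(4) unfolding eq by simp
  qed
  then show ?thesis using xs by blast
qed

lemma cyc:
  assumes g: "graph V E"
    and w1: "walk V E xs" and w2: "walk V E ys" and d1: "distinct xs" and d2: "distinct ys"
    and h: "hd xs = hd ys" and e: "E (last xs) (last ys)"
    and n1: "last xs \<notin> set ys" and n2: "last ys \<notin> set xs"
  shows "\<exists>c. is_cycle V E c"
proof -
  have sym: "\<And>x y. E x y \<Longrightarrow> E y x" using g by (simp add: graph_def)
  have "xs \<noteq> []" "ys \<noteq> []" using w1 w2 by (auto simp: walk_def)
  then have "\<exists>x\<in>set xs. x \<in> set ys" using h by (metis hd_in_set)
  then obtain xs1 z xs2 where xsd: "xs = xs1 @ z # xs2" "z \<in> set ys" "\<forall>u\<in>set xs2. u \<notin> set ys"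
    using split_list_last_prop[of xs "\<lambda>x. x \<in> set ys"] by blast
  obtain ys1 ys2 where ysd: "ys = ys1 @ z # ys2" using xsd(2) split_list by metis
  have "xs2 \<noteq> []" using n1 xsd by auto
  have "ys2 \<noteq> []" using n2 ysd xsd by auto
  have lx: "last xs2 = last xs" using \<open>xs2 \<noteq> []\<close> xsd by simp
  have ly: "last ys2 = last ys" using \<open>ys2 \<noteq> []\<close> ysd by simp
  let ?c = "z # xs2 @ rev ys2"
  have sx: "successively E (z # xs2)" using w1 xsd(1) by (auto simp: walk_succ successively_append_iff)
  have sy: "successively E (z # ys2)" using w2 ysd by (auto simp: walk_succ successively_append_iff)
  then have sy2: "successively E ys2" by (auto simp: successively_Cons)
  have "successively (\<lambda>x y. E y x) ys2" by (rule successively_mono[OF sy2]) (simp add: sym)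
  then have sry: "successively E (rev ys2)" by simp
  have "successively E ?c"
    using sx sry e lx ly \<open>xs2 \<noteq> []\<close> \<open>ys2 \<noteq> []\<close>
    by (simp only: append_Cons[symmetric] successively_append_iff) (simp add: hd_rev)
  moreover have "set ?c \<subseteq> V" using w1 w2 xsd ysd by (auto simp: walk_def)
  moreover have "distinct ?c" using d1 d2 xsd ysd by auto
  moreover have "length ?c \<ge> 3" using \<open>xs2 \<noteq> []\<close> \<open>ys2 \<noteq> []\<close>
    by (cases xs2; cases ys2) auto
  moreover have "E (last ?c) (hd ?c)"
  proof -
    have "last ?c = hd ys2" using \<open>ys2 \<noteq> []\<close> by (simp add: last_rev)
    moreover have "E z (hd ys2)" using sy \<open>ys2 \<noteq> []\<close> by (cases ys2) auto
    ultimately show ?thesis using sym by simp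
  qed
  ultimately show ?thesis unfolding is_cycle_def walk_succ by (intro exI[of _ ?c]) auto
qed

lemma idx_lt:
  assumes "walk V E xs" "hd xs = r" "length xs = Suc (gdist V E r v)" "last xs = v"
    "w \<in> set xs" "w \<noteq> v"
  shows "gdist V E r w < gdist V E r v"
proof -
  obtain as bs where eq: "xs = as @ w # bs" using assms(5) split_list by metis
  have "bs \<noteq> []" using assms(4,6) eq by auto
  have "gdist V E r w \<le> length as" using gdist_le_split assms(1,2) eq by metis
  then show ?thesis using assms(3) eq \<open>bs \<noteq> []\<close> by (cases bs) auto
qed

lemma adj_neq:
  assumes t: "tree V E" and r: "r \<in> V" and e: "E a b"
  shows "gdist V E r a \<noteq> gdist V E r b"
proof
  assume eqd: "gdist V E r a = gdist V E r b"
  have g: "graph V E" and c: "connected_graph V E" and nc: "\<nexists>xs. is_cycle V E xs"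
    using t by (auto simp: tree_def)
  have ab: "a \<in> V" "b \<in> V" "a \<noteq> b" using g e by (auto simp: graph_def)
  obtain xs where xs: "walk V E xs" "hd xs = r" "last xs = a" "length xs = Suc (gdist V E r a)" "distinct xs"
    using shortest_walk[OF c r ab(1)] by blast
  obtain ys where ys: "walk V E ys" "hd ys = r" "last ys = b" "length ys = Suc (gdist V E r b)" "distinct ys"
    using shortest_walk[OF c r ab(2)] by blast
  have "a \<notin> set ys" using idx_lt[OF ys(1,2,4,3), of a] eqd ab by auto
  moreover have "b \<notin> set xs" using idx_lt[OF xs(1,2,4,3), of b] eqd ab by auto
  ultimately show False using cyc[OF g xs(1) ys(1) xs(5) ys(5)] xs ys e nc by auto
qed

lemma uniq_par:
  assumes t: "tree V E" and r: "r \<in> V" and e1: "E c b" and e2: "E c' b"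
    and l1: "gdist V E r c < gdist V E r b" and l2: "gdist V E r c' < gdist V E r b"
  shows "c = c'"
proof (rule ccontr)
  assume ne: "c \<noteq> c'"
  have g: "graph V E" and cg: "connected_graph V E" and nc: "\<nexists>xs. is_cycle V E xs"
    using t by (auto simp: tree_def)
  have sym: "\<And>x y. E x y \<Longrightarrow> E y x" using g by (simp add: graph_def)
  have v: "c \<in> V" "c' \<in> V" "b \<in> V" "b \<noteq> c" "b \<noteq> c'" using g e1 e2 by (auto simp: graph_def)
  obtain xs where xs: "walk V E xs" "hd xs = r" "last xs = c" "length xs = Suc (gdist V E r c)" "distinct xs"
    using shortest_walk[OF cg r v(1)] by blast
  obtain ys where ys: "walk V E ys" "hd ys = r" "last ys = c'" "length ys = Suc (gdist V E r c')" "distinct ys"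
    using shortest_walk[OF cg r v(2)] by blast
  have bx: "b \<notin> set xs" using idx_lt[OF xs(1,2,4,3), of b] l1 v by auto
  have by': "b \<notin> set ys" using idx_lt[OF ys(1,2,4,3), of b] l2 v by auto
  have wx: "walk V E (xs @ [b])" using xs(1,3) e1 v by (auto simp: walk_succ successively_append_iff)
  have wy: "walk V E (ys @ [b])" using ys(1,3) e2 v by (auto simp: walk_succ successively_append_iff)
  have hx: "hd (xs @ [b]) = r" using xs(1,2) by (auto simp: walk_def)
  have hy: "hd (ys @ [b]) = r" using ys(1,2) by (auto simp: walk_def)
  show False
  proof (cases "c' \<in> set xs")
    case False
    have "\<exists>c. is_cycle V E c"
      using cyc[OF g wx ys(1) _ ys(5)] xs(5) bx by' hx ys(2,3) e2 False v sym by auto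
    then show False using nc by blast
  next
    case True
    then have "gdist V E r c' < gdist V E r c" using idx_lt[OF xs(1,2,4,3), of c'] ne by auto
    then have "c \<notin> set ys" using idx_lt[OF ys(1,2,4,3), of c] ne by auto
    have "\<exists>c. is_cycle V E c"
      using cyc[OF g wy xs(1) _ xs(5)] ys(5) by' bx hy xs(2,3) e1 \<open>c \<notin> set ys\<close> v sym by auto
    then show False using nc by blast
  qed
qed

lemma par_ex:
  assumes t: "tree V E" and r: "r \<in> V" and v: "v \<in> V" "v \<noteq> r"
  shows "\<exists>c. E c v \<and> gdist V E r c < gdist V E r v"
proof -
  have cg: "connected_graph V E" using t by (auto simp: tree_def)
  obtain xs where xs: "walk V E xs" "hd xs = r" "last xs = v" "length xs = Suc (gdist V E r v)" "distinct xs"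
    using shortest_walk[OF cg r v(1)] by blast
  have "xs \<noteq> []" using xs by (auto simp: walk_def)
  then have eq: "xs = butlast xs @ [v]" using xs(3) by (metis append_butlast_last_id)
  have "butlast xs \<noteq> []" using eq xs(2) v by (metis append_Nil list.sel(1))
  then obtain as c where bl: "butlast xs = as @ [c]" by (metis rev_exhaust)
  have eq2: "xs = as @ c # [v]" using eq bl by simp
  have "E c v" using xs(1) eq2 by (auto simp: walk_succ successively_append_iff)
  moreover have "gdist V E r c \<le> length as" using gdist_le_split[of V E as c "[v]" r] xs(1,2) eq2 by simp
  ultimately show ?thesis using xs(4) eq2 by (intro exI[of _ c]) simp
qed

lemma prop_l1:
  assumes t: "tree V E" and r1: "l1 \<in> V" and c: "condII V E S l1" and l2: "l2 \<in> S"
  shows "\<And>x y. E x y \<Longrightarrow> gdist V E l1 x < gdist V E l1 y \<Longrightarrow> x \<notin> S \<Longrightarrow> y \<notin> S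
     \<Longrightarrow> gdist V E l2 y < gdist V E l2 x \<Longrightarrow> l2 \<in> V \<Longrightarrow> False"
proof -
  fix x y
  assume "E x y" "gdist V E l1 x < gdist V E l1 y" "x \<notin> S" "y \<notin> S"
     "gdist V E l2 y < gdist V E l2 x" "l2 \<in> V"
  then show False
  proof (induction "gdist V E l2 y" arbitrary: x y rule: less_induct)
    case less
    have g: "graph V E" using t by (simp add: tree_def)
    have yV: "y \<in> V" using g less.prems(1) by (simp add: graph_def)
    have N: "nbhd V E y \<inter> S = {}" using c less.prems unfolding condII_def by blast
    have "y \<noteq> l2" using less.prems l2 by auto
    then obtain z where z: "E z y" "gdist V E l2 z < gdist V E l2 y"
      using par_ex[OF t less.prems(6) yV] by blast
    have zx: "z \<noteq> x" using z(2) less.prems(5) by auto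
    have zV: "z \<in> V" using g z(1) by (simp add: graph_def)
    have eyz: "E y z" using g z(1) by (simp add: graph_def)
    have "\<not> gdist V E l1 z < gdist V E l1 y"
      using uniq_par[OF t r1 z(1) less.prems(1) _ less.prems(2)] zx by blast
    moreover have "gdist V E l1 z \<noteq> gdist V E l1 y" using adj_neq[OF t r1 z(1)] .
    ultimately have "gdist V E l1 y < gdist V E l1 z" by simp
    moreover have "z \<notin> S" using N zV eyz by (auto simp: nbhd_def)
    ultimately show False
      using less.hyps[OF z(2) eyz _ less.prems(4)] z(2) less.prems(6) by blast
  qed
qed

theorem mainTheorem10:
  fixes V :: "'a set" and E :: "'a \<Rightarrow> 'a \<Rightarrow> bool" and S :: "'a set" and l1 l2 :: 'a
  assumes "tree V E" and "card V \<ge> 3" and "S \<subseteq> V"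
    and "l1 \<in> S" and "leaf V E l1" and "condII V E S l1"
    and "l2 \<in> S" and "leaf V E l2" and "l2 \<noteq> l1"
  shows "condII V E S l2"
  unfolding condII_def
proof (intro allI impI)
  fix a b
  assume ab: "E a b \<and> gdist V E l2 a < gdist V E l2 b"
  have t: "tree V E" by fact
  have g: "graph V E" using t by (simp add: tree_def)
  have finV: "finite V" using g by (simp add: graph_def)
  have r1: "l1 \<in> V" and r2: "l2 \<in> V" using assms by (auto simp: leaf_def)
  have aV: "a \<in> V" and bV: "b \<in> V" and eba: "E b a" using g ab by (auto simp: graph_def)
  have finN: "finite (nbhd V E b \<inter> S)" using finV by (simp add: nbhd_def)
  have aN: "a \<in> nbhd V E b" using aV eba by (simp add: nbhd_def)
  have c1a: "\<And>a b. E a b \<Longrightarrow> gdist V E l1 a < gdist V E l1 b \<Longrightarrow> a \<notin> S \<Longrightarrow> b \<notin> S \<Longrightarrow> nbhd V E b \<inter> S = {}"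
    and c1b: "\<And>a b. E a b \<Longrightarrow> gdist V E l1 a < gdist V E l1 b \<Longrightarrow> a \<notin> S \<Longrightarrow> b \<in> S \<Longrightarrow> card (nbhd V E b \<inter> S) \<le> 1"
    and c1c: "\<And>a b. E a b \<Longrightarrow> gdist V E l1 a < gdist V E l1 b \<Longrightarrow> a \<in> S \<Longrightarrow> b \<notin> S \<Longrightarrow> card ((nbhd V E b \<inter> S) - {a}) = 1"
    and c1d: "\<And>a b. E a b \<Longrightarrow> gdist V E l1 a < gdist V E l1 b \<Longrightarrow> a \<in> S \<Longrightarrow> b \<in> S \<Longrightarrow> card ((nbhd V E b \<inter> S) - {a}) = 0"
    using assms(6) unfolding condII_def by meson+
  show "(a \<notin> S \<and> b \<notin> S \<longrightarrow> nbhd V E b \<inter> S = {}) \<and>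
       (a \<notin> S \<and> b \<in> S \<longrightarrow> card (nbhd V E b \<inter> S) \<le> 1) \<and>
       (a \<in> S \<and> b \<notin> S \<longrightarrow> card ((nbhd V E b \<inter> S) - {a}) = 1) \<and>
       (a \<in> S \<and> b \<in> S \<longrightarrow> card ((nbhd V E b \<inter> S) - {a}) = 0)"
  proof (cases "gdist V E l1 a < gdist V E l1 b")
    case True
    then show ?thesis using c1a[of a b] c1b[of a b] c1c[of a b] c1d[of a b] ab by simp
  next
    case False
    then have ba: "gdist V E l1 b < gdist V E l1 a" using adj_neq[OF t r1, of a b] ab by simp
    show ?thesis
    proof (cases "b \<in> S")
      case True
      have le1: "card (nbhd V E b \<inter> S) \<le> 1"
      proof (cases "b = l1")
        case True
        then have "card (nbhd V E b) = 1" using assms(5) by (simp add: leaf_def)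
        moreover have "finite (nbhd V E b)" using finV by (simp add: nbhd_def)
        ultimately show ?thesis using card_mono[of "nbhd V E b" "nbhd V E b \<inter> S"] by simp
      next
        case False
        then obtain c where c: "E c b" "gdist V E l1 c < gdist V E l1 b"
          using par_ex[OF t r1 bV] by blast
        show ?thesis
        proof (cases "c \<in> S")
          case False then show ?thesis using c1b[OF c] \<open>b \<in> S\<close> by simp
        next
          case cS: True
          then have "card (nbhd V E b \<inter> S - {c}) = 0" using c1d[OF c] \<open>b \<in> S\<close> by simp
          then have "nbhd V E b \<inter> S \<subseteq> {c}" using finN by auto
          then show ?thesis using card_mono[of "{c}" "nbhd V E b \<inter> S"] by simp
        qed
      qed
      have "a \<in> S \<Longrightarrow> card (nbhd V E b \<inter> S - {a}) = 0"
      proof -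
        assume "a \<in> S"
        then have "a \<in> nbhd V E b \<inter> S" using aN by simp
        then have "card (nbhd V E b \<inter> S - {a}) = card (nbhd V E b \<inter> S) - 1"
          using finN by simp
        then show ?thesis using le1 by simp
      qed
      then show ?thesis using True le1 by simp
    next
      case bS: False
      have "b \<noteq> l1" using bS assms(4) by auto
      then obtain c where c: "E c b" "gdist V E l1 c < gdist V E l1 b"
        using par_ex[OF t r1 bV] by blast
      have ca: "c \<noteq> a" using c(2) ba by auto
      have aS: "a \<in> S"
      proof (rule ccontr)
        assume "a \<notin> S"
        have d2ab: "gdist V E l2 a < gdist V E l2 b" using ab by simp
        show False by (rule prop_l1[OF t r1 assms(6) assms(7) eba ba bS \<open>a \<notin> S\<close> d2ab r2])
      qed
      have cS: "c \<in> S"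
      proof (rule ccontr)
        assume "c \<notin> S"
        then have "nbhd V E b \<inter> S = {}" using c1a[OF c] bS by simp
        then show False using aS aN by blast
      qed
      have "card (nbhd V E b \<inter> S - {c}) = 1" using c1c[OF c] bS cS by simp
      then obtain x where x: "nbhd V E b \<inter> S - {c} = {x}" by (rule card_1_singletonE)
      have ain: "a \<in> nbhd V E b \<inter> S - {c}" using aS aN ca by simp
      have "x = a" using ain unfolding x by simp
      have "E b c" "c \<in> V" using c(1) g unfolding graph_def by blast+
      then have cN: "c \<in> nbhd V E b \<inter> S" using cS by (simp add: nbhd_def)
      have "nbhd V E b \<inter> S = insert c {a}" using x \<open>x = a\<close> cN by auto
      then have "nbhd V E b \<inter> S - {a} = {c}" using ca by auto
      then have "card (nbhd V E b \<inter> S - {a}) = 1" by simp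
      then show ?thesis using bS aS by simp
    qed
  qed
qed

end
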